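(* Consider the discrete-time system $x(t+1) = A x(t) + B u(t) + C v(t) + w$ with $A \in \mathbb{R}^{d_x\times d_x}$, $B\in\mathbb{R}^{d_x\times d_u}$, $C \in\mathbb{R}^{d_x\times d_v}$, constant $w\in\mathbb{R}^{d_x}$, and disturbance $v(s) \in \mathcal V = \langle c_{\mathcal V}\mid G_{\mathcal V}\rangle$ with $G_{\mathcal V}\in\mathbb{R}^{d_v\times n_{\mathcal V}}$. Let $G_{\mathcal I} \in \mathbb{R}^{d_x\times n_{\mathcal I}}$, $\alpha \in \mathbb{R}^{d_x}$, $\gamma\in\mathbb{R}^{n_{\mathcal I}}$ with $\gamma \geq 0$, $\Gamma = \mathrm{diag}(\gamma)$, $\mathcal I = \langle \alpha \mid G_{\mathcal I}\Gamma\rangle$. For $s = 0,\ldots,t-1$ let $\beta(s)\in\mathbb{R}^{d_u}$, $\Phi(s)\in\mathbb{R}^{d_u\times n_{\mathcal I}}$, $G_{\mathcal F(s)}\in\mathbb{R}^{d_u\times m_s}$, $\psi(s)\in\mathbb{R}^{m_s}$ with $\psi(s)\geq 0$, $\Psi(s) = \mathrm{diag}(\psi(s))$. Define the reach set $\mathcal R_t(\mathcal I)$ as the set of states $x(t)$ obtained from $x(0) = \alpha + G_{\mathcal I}\Gamma\lambda$, inputs $u(s) = \beta(s) + \Phi(s)\lambda + G_{\mathcal F(s)}\Psi(s)\rho(s)$ and disturbances $v(s) \in\mathcal V$, $s = 0,\ldots,t-1$, as $\lambda$ ranges over $[-1,1]^{n_{\mathcal I}}$, each $\rho(s)$ over $[-1,1]^{m_s}$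 and each $v(s)$ over $\mathcal V$. Then $\mathcal R_t(\mathcal I)$ is the zonotope with $n_{\mathcal I} + \sum_{s=0}^{t-1}m_s + t\,n_{\mathcal V}$ generators, center \[ A^t\alpha + \sum_{s=0}^{t-1}A^{t-1-s}\big(B\beta(s) + Cc_{\mathcal V} + w\big), \] and generator matrix \[ \big[\,F_{\mathcal I}\ \ F_0\ \ F_1\ \cdots\ F_{t-1}\ \ A^{t-1}CG_{\mathcal V}\ \ A^{t-2}CG_{\mathcal V}\ \cdots\ CG_{\mathcal V}\,\big], \] where $F_{\mathcal I} = A^tG_{\mathcal I}\Gamma + \sum_{s=0}^{t-1}A^{t-1-s}B\Phi(s)$ and $F_s = A^{t-1-s}BG_{\mathcal F(s)}\Psi(s)$ for $s = 0,\ldots,t-1$.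
   Context: The notation $\langle c \mid G\rangle$ denotes the zonotope $\{c + G\lambda : \lambda \in [-1,1]^n\}$ with center $c$ and generator matrix $G$. $\mathrm{diag}(\gamma)$ is the diagonal matrix with $\gamma$ on its diagonal; $[M_1\ M_2\ \cdots]$ denotes horizontal concatenation. *)

theory Defs
  imports Complex_Main "Jordan_Normal_Form.Matrix"
begin

definition zonotope :: "real vec \<Rightarrow> real mat \<Rightarrow> real vec set" where
  "zonotope c G = {c + G *\<^sub>v lam | lam. lam \<in> carrier_vec (dim_col G) \<and>
                                      (\<forall>j < dim_col G. \<bar>lam $ j\<bar> \<le> 1)}"

definition unit_box :: "nat \<Rightarrow> real vec set" where
  "unit_box n = {lam. lam \<in> carrier_vec n \<and> (\<forall>j < n. \<bar>lam $ j\<bar> \<le> 1)}"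

definition diag_of_vec :: "real vec \<Rightarrow> real mat" where
  "diag_of_vec g = mat_diag (dim_vec g) (\<lambda>i. g $ i)"

definition hcat :: "nat \<Rightarrow> real mat list \<Rightarrow> real mat" where
  "hcat d Ms = mat_of_cols d (concat (map cols Ms))"

definition vsum :: "nat \<Rightarrow> (nat \<Rightarrow> real vec) \<Rightarrow> nat set \<Rightarrow> real vec" where
  "vsum d f S = vec d (\<lambda>i. \<Sum>s\<in>S. f s $ i)"

definition msum :: "nat \<Rightarrow> nat \<Rightarrow> (nat \<Rightarrow> real mat) \<Rightarrow> nat set \<Rightarrow> real mat" where
  "msum nr nc f S = mat nr nc (\<lambda>(i,j). \<Sum>s\<in>S. f s $$ (i,j))"

fun traj :: "real mat \<Rightarrow> real mat \<Rightarrow> real mat \<Rightarrow> real vec \<Rightarrow> real vec \<Rightarrow>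
             (nat \<Rightarrow> real vec) \<Rightarrow> (nat \<Rightarrow> real vec) \<Rightarrow> nat \<Rightarrow> real vec" where
  "traj A B C w x0 u v 0 = x0"
| "traj A B C w x0 u v (Suc s) =
     A *\<^sub>v traj A B C w x0 u v s + B *\<^sub>v u s + C *\<^sub>v v s + w"

end

theory Submission
  imports Defs
begin


lemma mat_of_cols_append_mult:
  assumes a: "a \<in> carrier_vec (length cs1)" and b: "b \<in> carrier_vec (length cs2)"
  shows "mat_of_cols d (cs1 @ cs2) *\<^sub>v (a @\<^sub>v b) = mat_of_cols d cs1 *\<^sub>v a + mat_of_cols d cs2 *\<^sub>v b"
proof (rule eq_vecI)
  fix i assume "i < dim_vec (mat_of_cols d cs1 *\<^sub>v a + mat_of_cols d cs2 *\<^sub>v b)"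
  hence i: "i < d" by simp
  have r: "row (mat_of_cols d (cs1@cs2)) i = row (mat_of_cols d cs1) i @\<^sub>v row (mat_of_cols d cs2) i"
    by (rule eq_vecI) (auto simp: mat_of_cols_def nth_append i)
  show "(mat_of_cols d (cs1 @ cs2) *\<^sub>v (a @\<^sub>v b)) $ i = (mat_of_cols d cs1 *\<^sub>v a + mat_of_cols d cs2 *\<^sub>v b) $ i"
    using i a b by (simp add: r, intro scalar_prod_append) (auto simp: mat_of_cols_def)
qed simp

lemma dim_hcat[simp]: "dim_row (hcat d Ms) = d" "dim_col (hcat d Ms) = sum_list (map dim_col Ms)"
  unfolding hcat_def by (auto simp: length_concat comp_def)

lemma hcat_append_mult:
  assumes a: "a \<in> carrier_vec (dim_col (hcat d Ms))" and b: "b \<in> carrier_vec (dim_col (hcat d Ns))"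
  shows "hcat d (Ms @ Ns) *\<^sub>v (a @\<^sub>v b) = hcat d Ms *\<^sub>v a + hcat d Ns *\<^sub>v b"
  using assms unfolding hcat_def by (simp add: mat_of_cols_append_mult)

lemma hcat_single: "dim_row M = d \<Longrightarrow> hcat d [M] = M"
  unfolding hcat_def by (metis append.right_neutral concat.simps list.simps mat_of_cols_cols)

lemma zonotope_alt: "zonotope c G = {c + G *\<^sub>v lam | lam. lam \<in> unit_box (dim_col G)}"
  unfolding zonotope_def unit_box_def by auto

lemma zono_append:
  assumes c: "c \<in> carrier_vec d"
  shows "zonotope c (hcat d (Ms @ Ns)) =
    {x + y | x y. x \<in> zonotope c (hcat d Ms) \<and> y \<in> zonotope (0\<^sub>v d) (hcat d Ns)}"
proof -
  let ?M1 = "hcat d Ms" and ?M2 = "hcat d Ns"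
  define n1 where "n1 = dim_col ?M1"
  define n2 where "n2 = dim_col ?M2"
  have dc: "dim_col (hcat d (Ms @ Ns)) = n1 + n2" unfolding n1_def n2_def by simp
  show ?thesis
  proof (intro equalityI subsetI)
    fix z assume "z \<in> zonotope c (hcat d (Ms @ Ns))"
    then obtain lam where z: "z = c + hcat d (Ms @ Ns) *\<^sub>v lam" and lam: "lam \<in> unit_box (n1+n2)"
      unfolding zonotope_alt dc by auto
    define a where "a = vec_first lam n1"
    define b where "b = vec_last lam n2"
    have lc: "lam \<in> carrier_vec (n1+n2)" using lam unfolding unit_box_def by auto
    have ab: "lam = a @\<^sub>v b" unfolding a_def b_def using lc by simp
    have ua: "a \<in> unit_box n1" using lam lc unfolding unit_box_def a_def vec_first_def by auto
    have ub: "b \<in> unit_box n2" using lam lc unfolding unit_box_def b_def vec_last_def by auto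
    have ac: "a \<in> carrier_vec n1" "b \<in> carrier_vec n2" unfolding a_def b_def by auto
    have "z = (c + ?M1 *\<^sub>v a) + (0\<^sub>v d + ?M2 *\<^sub>v b)"
      unfolding z ab using ac c
      by (subst hcat_append_mult) (auto simp: n1_def n2_def)
    moreover have "c + ?M1 *\<^sub>v a \<in> zonotope c ?M1" using ua unfolding zonotope_alt n1_def by auto
    moreover have "0\<^sub>v d + ?M2 *\<^sub>v b \<in> zonotope (0\<^sub>v d) ?M2" using ub unfolding zonotope_alt n2_def by auto
    ultimately show "z \<in> {x + y | x y. x \<in> zonotope c ?M1 \<and> y \<in> zonotope (0\<^sub>v d) ?M2}" by blast
  next
    fix z assume "z \<in> {x + y | x y. x \<in> zonotope c ?M1 \<and> y \<in> zonotope (0\<^sub>v d) ?M2}"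
    then obtain a b where z: "z = (c + ?M1 *\<^sub>v a) + (0\<^sub>v d + ?M2 *\<^sub>v b)"
      and ua: "a \<in> unit_box n1" and ub: "b \<in> unit_box n2"
      unfolding zonotope_alt n1_def n2_def by blast
    have ac: "a \<in> carrier_vec n1" "b \<in> carrier_vec n2" using ua ub unfolding unit_box_def by auto
    have "a @\<^sub>v b \<in> unit_box (n1+n2)" using ua ub ac unfolding unit_box_def by auto
    moreover have "z = c + hcat d (Ms @ Ns) *\<^sub>v (a @\<^sub>v b)"
      unfolding z using ac c
      by (subst hcat_append_mult) (auto simp: n1_def n2_def)
    ultimately show "z \<in> zonotope c (hcat d (Ms @ Ns))" unfolding zonotope_alt dc by blast
  qed
qed

lemma vsum_carrier[simp]: "vsum d f S \<in> carrier_vec d" "dim_vec (vsum d f S) = d"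
  unfolding vsum_def by auto

lemma vsum_cong: "(\<And>s. s \<in> S \<Longrightarrow> f s = g s) \<Longrightarrow> vsum d f S = vsum d g S"
  unfolding vsum_def by auto

lemma vsum_empty[simp]: "vsum d f {} = 0\<^sub>v d"
  unfolding vsum_def by auto

lemma vsum_add:
  assumes "\<And>s. s \<in> S \<Longrightarrow> f s \<in> carrier_vec d" "\<And>s. s \<in> S \<Longrightarrow> g s \<in> carrier_vec d"
  shows "vsum d (\<lambda>s. f s + g s) S = vsum d f S + vsum d g S"
proof -
  have "(f s + g s) $ i = f s $ i + g s $ i" if "s \<in> S" "i < d" for s i
    using assms(1)[OF that(1)] assms(2)[OF that(1)] that(2) by simp
  then show ?thesis unfolding vsum_def by (intro eq_vecI) (auto simp: sum.distrib[symmetric])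
qed

lemma vsum_Suc:
  assumes "f t \<in> carrier_vec d"
  shows "vsum d f {..<Suc t} = vsum d f {..<t} + f t"
  unfolding vsum_def by (rule eq_vecI) (use assms in auto)

lemma mult_vsum:
  assumes M: "M \<in> carrier_mat n d" and f: "\<And>s. s \<in> S \<Longrightarrow> f s \<in> carrier_vec d"
  shows "M *\<^sub>v vsum d f S = vsum n (\<lambda>s. M *\<^sub>v f s) S"
proof (rule eq_vecI)
  fix i assume "i < dim_vec (vsum n (\<lambda>s. M *\<^sub>v f s) S)"
  hence i: "i < n" by simp
  have "(M *\<^sub>v vsum d f S) $ i = (\<Sum>j<d. M $$ (i,j) * (\<Sum>s\<in>S. f s $ j))"
    using M i by (simp add: scalar_prod_def vsum_def lessThan_atLeast0)
  also have "\<dots> = (\<Sum>s\<in>S. \<Sum>j<d. M $$ (i,j) * f s $ j)"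
    by (simp add: sum_distrib_left sum.swap[of _ S])
  also have "\<dots> = vsum n (\<lambda>s. M *\<^sub>v f s) S $ i"
  proof -
    have "(M *\<^sub>v f s) $ i = (\<Sum>j<d. M $$ (i,j) * f s $ j)" if s: "s \<in> S" for s
    proof -
      have "dim_vec (f s) = d" using f[OF s] by auto
      then show ?thesis using M i by (simp add: scalar_prod_def lessThan_atLeast0)
    qed
    then show ?thesis using i M by (simp add: vsum_def)
  qed
  finally show "(M *\<^sub>v vsum d f S) $ i = vsum n (\<lambda>s. M *\<^sub>v f s) S $ i" .
qed (use M in simp)

lemma msum_mult:
  assumes f: "\<And>s. s \<in> S \<Longrightarrow> f s \<in> carrier_mat nr nc" and x: "x \<in> carrier_vec nc"
  shows "msum nr nc f S *\<^sub>v x = vsum nr (\<lambda>s. f s *\<^sub>v x) S"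
proof (rule eq_vecI)
  fix i assume "i < dim_vec (vsum nr (\<lambda>s. f s *\<^sub>v x) S)"
  hence i: "i < nr" by simp
  have "(msum nr nc f S *\<^sub>v x) $ i = (\<Sum>j<nc. (\<Sum>s\<in>S. f s $$ (i,j)) * x $ j)"
    using x i by (simp add: scalar_prod_def msum_def lessThan_atLeast0)
  also have "\<dots> = (\<Sum>s\<in>S. \<Sum>j<nc. f s $$ (i,j) * x $ j)"
    by (simp add: sum_distrib_right sum.swap[of _ S])
  also have "\<dots> = vsum nr (\<lambda>s. f s *\<^sub>v x) S $ i"
  proof -
    have "(f s *\<^sub>v x) $ i = (\<Sum>j<nc. f s $$ (i,j) * x $ j)" if s: "s \<in> S" for s
    proof -
      have "dim_row (f s) = nr" "dim_col (f s) = nc" using f[OF s] by auto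
      then show ?thesis using x i by (simp add: scalar_prod_def lessThan_atLeast0)
    qed
    then show ?thesis using i by (simp add: vsum_def)
  qed
  finally show "(msum nr nc f S *\<^sub>v x) $ i = vsum nr (\<lambda>s. f s *\<^sub>v x) S $ i" .
qed (simp add: msum_def)

lemma msum_carrier[simp]: "msum nr nc f S \<in> carrier_mat nr nc"
  unfolding msum_def by auto

lemma zono_list:
  assumes "\<And>s. s < t \<Longrightarrow> dim_row (f s) = d"
  shows "zonotope (0\<^sub>v d) (hcat d (map f [0..<t])) =
    {vsum d (\<lambda>s. f s *\<^sub>v r s) {..<t} | r. \<forall>s<t. r s \<in> unit_box (dim_col (f s))}"
  using assms
proof (induction t)
  case 0
  have h0: "hcat d [] *\<^sub>v lam = 0\<^sub>v d" if "lam \<in> carrier_vec 0" for lam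
    using that by (intro eq_vecI) (auto simp: scalar_prod_def)
  have "zonotope (0\<^sub>v d) (hcat d []) = {0\<^sub>v d}"
  proof (intro equalityI subsetI)
    fix z assume "z \<in> zonotope (0\<^sub>v d) (hcat d [])"
    then obtain lam where "z = 0\<^sub>v d + hcat d [] *\<^sub>v lam" "lam \<in> carrier_vec 0"
      unfolding zonotope_def by auto
    then show "z \<in> {0\<^sub>v d}" using h0 by simp
  next
    fix z :: "real vec" assume "z \<in> {0\<^sub>v d}"
    then show "z \<in> zonotope (0\<^sub>v d) (hcat d [])" unfolding zonotope_def
      using h0[of "0\<^sub>v 0"] by (auto intro!: exI[of _ "0\<^sub>v 0"])
  qed
  then show ?case by simp
next
  case (Suc t)
  have IH: "zonotope (0\<^sub>v d) (hcat d (map f [0..<t])) =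
    {vsum d (\<lambda>s. f s *\<^sub>v r s) {..<t} | r. \<forall>s<t. r s \<in> unit_box (dim_col (f s))}"
    using Suc by auto
  have ft: "dim_row (f t) = d" using Suc by auto
  have eq: "map f [0..<Suc t] = map f [0..<t] @ [f t]" by simp
  show ?case
  proof (intro equalityI subsetI)
    fix z assume "z \<in> zonotope (0\<^sub>v d) (hcat d (map f [0..<Suc t]))"
    then obtain x y where z: "z = x + y" and x: "x \<in> zonotope (0\<^sub>v d) (hcat d (map f [0..<t]))"
      and y: "y \<in> zonotope (0\<^sub>v d) (f t)"
      unfolding eq zono_append[OF zero_carrier_vec] hcat_single[OF ft] by blast
    from x IH obtain r where x: "x = vsum d (\<lambda>s. f s *\<^sub>v r s) {..<t}"
      and r: "\<forall>s<t. r s \<in> unit_box (dim_col (f s))" by blast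
    from y obtain q where y: "y = 0\<^sub>v d + f t *\<^sub>v q" and q: "q \<in> unit_box (dim_col (f t))"
      unfolding zonotope_alt by blast
    define r' where "r' = r(t := q)"
    have qc: "q \<in> carrier_vec (dim_col (f t))" using q unfolding unit_box_def by auto
    have ftq: "f t *\<^sub>v q \<in> carrier_vec d" using ft by (intro carrier_vecI) simp
    have y': "y = f t *\<^sub>v q" unfolding y using ftq by simp
    have "vsum d (\<lambda>s. f s *\<^sub>v r' s) {..<Suc t} = vsum d (\<lambda>s. f s *\<^sub>v r' s) {..<t} + f t *\<^sub>v q"
    proof -
      have r't: "r' t = q" by (simp add: r'_def)
      have c: "f t *\<^sub>v r' t \<in> carrier_vec d" using ftq unfolding r't .
      show ?thesis using vsum_Suc[of "\<lambda>s. f s *\<^sub>v r' s" t d, OF c] unfolding r't .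
    qed
    also have "vsum d (\<lambda>s. f s *\<^sub>v r' s) {..<t} = vsum d (\<lambda>s. f s *\<^sub>v r s) {..<t}"
      by (rule vsum_cong) (simp add: r'_def)
    finally have "z = vsum d (\<lambda>s. f s *\<^sub>v r' s) {..<Suc t}"
      unfolding z x y' by simp
    moreover have "\<forall>s<Suc t. r' s \<in> unit_box (dim_col (f s))"
      using r q unfolding r'_def by (auto simp: less_Suc_eq)
    ultimately show "z \<in> {vsum d (\<lambda>s. f s *\<^sub>v r s) {..<Suc t} | r. \<forall>s<Suc t. r s \<in> unit_box (dim_col (f s))}"
      by blast
  next
    fix z assume "z \<in> {vsum d (\<lambda>s. f s *\<^sub>v r s) {..<Suc t} | r. \<forall>s<Suc t. r s \<in> unit_box (dim_col (f s))}"
    then obtain r where z: "z = vsum d (\<lambda>s. f s *\<^sub>v r s) {..<Suc t}"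
      and r: "\<forall>s<Suc t. r s \<in> unit_box (dim_col (f s))" by blast
    have rt: "\<forall>s<t. r s \<in> unit_box (dim_col (f s))" using r by simp
    have "vsum d (\<lambda>s. f s *\<^sub>v r s) {..<t} \<in> zonotope (0\<^sub>v d) (hcat d (map f [0..<t]))"
      unfolding IH using rt by blast
    moreover have "0\<^sub>v d + f t *\<^sub>v r t \<in> zonotope (0\<^sub>v d) (f t)"
      using r unfolding zonotope_alt by auto
    moreover have "z = vsum d (\<lambda>s. f s *\<^sub>v r s) {..<t} + (0\<^sub>v d + f t *\<^sub>v r t)"
    proof -
      have c: "f t *\<^sub>v r t \<in> carrier_vec d" using ft by (intro carrier_vecI) simp
      show ?thesis unfolding z vsum_Suc[of "\<lambda>s. f s *\<^sub>v r s" t d, OF c] using c by simp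
    qed
    ultimately show "z \<in> zonotope (0\<^sub>v d) (hcat d (map f [0..<Suc t]))"
      unfolding eq zono_append[OF zero_carrier_vec] hcat_single[OF ft] by blast
  qed
qed

lemma pow_mat_Suc': "A \<in> carrier_mat n n \<Longrightarrow> A ^\<^sub>m Suc k = A * A ^\<^sub>m k"
proof (induction k)
  case 0 then show ?case by simp
next
  case (Suc k)
  have "A ^\<^sub>m Suc (Suc k) = (A * A ^\<^sub>m k) * A" using Suc by simp
  also have "\<dots> = A * (A ^\<^sub>m k * A)" using Suc by (simp add: assoc_mult_mat[of _ n n _ n _ n])
  finally show ?case by simp
qed

lemma traj_closed:
  assumes A: "A \<in> carrier_mat d d" and B: "B \<in> carrier_mat d du" and C: "C \<in> carrier_mat d dv"
    and w: "w \<in> carrier_vec d" and x0: "x0 \<in> carrier_vec d"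
    and u: "\<forall>s<t. u s \<in> carrier_vec du" and v: "\<forall>s<t. v s \<in> carrier_vec dv"
  shows "traj A B C w x0 u v t = (A ^\<^sub>m t) *\<^sub>v x0
     + vsum d (\<lambda>s. (A ^\<^sub>m (t - 1 - s)) *\<^sub>v (B *\<^sub>v u s + C *\<^sub>v v s + w)) {..<t}"
  using u v
proof (induction t)
  case 0 then show ?case using A x0 by simp
next
  case (Suc t)
  let ?g = "\<lambda>s. B *\<^sub>v u s + C *\<^sub>v v s + w"
  have gc: "?g s \<in> carrier_vec d" if "s < Suc t" for s
    using Suc.prems that B C w by auto
  have IH: "traj A B C w x0 u v t = (A ^\<^sub>m t) *\<^sub>v x0 + vsum d (\<lambda>s. (A ^\<^sub>m (t - 1 - s)) *\<^sub>v ?g s) {..<t}"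
    using Suc by auto
  have a1: "A ^\<^sub>m t *\<^sub>v x0 \<in> carrier_vec d" using pow_carrier_mat[OF A, of t] x0 by (rule mult_mat_vec_carrier)
  have tc: "traj A B C w x0 u v t \<in> carrier_vec d" unfolding IH by (intro add_carrier_vec a1 vsum_carrier)
  have "traj A B C w x0 u v (Suc t) = A *\<^sub>v traj A B C w x0 u v t + ?g t"
    by (simp, rule eq_vecI) (use tc A B C w Suc.prems in auto)
  also have "A *\<^sub>v traj A B C w x0 u v t = (A ^\<^sub>m Suc t) *\<^sub>v x0
        + vsum d (\<lambda>s. (A ^\<^sub>m (Suc t - 1 - s)) *\<^sub>v ?g s) {..<t}"
  proof -
    have "A *\<^sub>v traj A B C w x0 u v t = A *\<^sub>v ((A ^\<^sub>m t) *\<^sub>v x0) + A *\<^sub>v vsum d (\<lambda>s. (A ^\<^sub>m (t - 1 - s)) *\<^sub>v ?g s) {..<t}"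
      unfolding IH using A a1 by (subst mult_add_distrib_mat_vec[of _ d d]) auto
    also have "A *\<^sub>v ((A ^\<^sub>m t) *\<^sub>v x0) = (A ^\<^sub>m Suc t) *\<^sub>v x0"
      unfolding pow_mat_Suc'[OF A] using A x0 by (subst assoc_mult_mat_vec[of _ d d _ d]) auto
    also have "A *\<^sub>v vsum d (\<lambda>s. (A ^\<^sub>m (t - 1 - s)) *\<^sub>v ?g s) {..<t}
        = vsum d (\<lambda>s. A *\<^sub>v ((A ^\<^sub>m (t - 1 - s)) *\<^sub>v ?g s)) {..<t}"
      using A gc by (intro mult_vsum[OF A] mult_mat_vec_carrier[OF pow_carrier_mat[OF A]]) auto
    also have "\<dots> = vsum d (\<lambda>s. (A ^\<^sub>m (Suc t - 1 - s)) *\<^sub>v ?g s) {..<t}"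
    proof (rule vsum_cong)
      fix s assume s: "s \<in> {..<t}"
      hence e: "Suc t - 1 - s = Suc (t - 1 - s)" by auto
      show "A *\<^sub>v ((A ^\<^sub>m (t - 1 - s)) *\<^sub>v ?g s) = (A ^\<^sub>m (Suc t - 1 - s)) *\<^sub>v ?g s"
        unfolding e pow_mat_Suc'[OF A] using A gc s
        by (subst assoc_mult_mat_vec[of _ d d _ d]) auto
    qed
    finally show ?thesis .
  qed
  finally have T: "traj A B C w x0 u v (Suc t) = ((A ^\<^sub>m Suc t) *\<^sub>v x0
        + vsum d (\<lambda>s. (A ^\<^sub>m (Suc t - 1 - s)) *\<^sub>v ?g s) {..<t}) + ?g t" .
  have a2: "A ^\<^sub>m Suc t *\<^sub>v x0 \<in> carrier_vec d" using pow_carrier_mat[OF A, of "Suc t"] x0 by (rule mult_mat_vec_carrier)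
  have e0: "(A ^\<^sub>m (Suc t - 1 - t)) *\<^sub>v ?g t = ?g t" using A gc[of t] by simp
  have c0: "(A ^\<^sub>m (Suc t - 1 - t)) *\<^sub>v ?g t \<in> carrier_vec d" unfolding e0 using gc[of t] by simp
  have VS: "vsum d (\<lambda>s. (A ^\<^sub>m (Suc t - 1 - s)) *\<^sub>v ?g s) {..<Suc t}
     = vsum d (\<lambda>s. (A ^\<^sub>m (Suc t - 1 - s)) *\<^sub>v ?g s) {..<t} + ?g t"
    using vsum_Suc[of "\<lambda>s. (A ^\<^sub>m (Suc t - 1 - s)) *\<^sub>v ?g s" t d, OF c0] unfolding e0 .
  show ?case unfolding T VS
    by (rule assoc_add_vec[OF a2 vsum_carrier(1) gc[of t]]) simp
qed




lemma diag_carrier: "g \<in> carrier_vec n \<Longrightarrow> diag_of_vec g \<in> carrier_mat n n"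
  unfolding diag_of_vec_def by auto

lemma step_eq:
  assumes M: "M \<in> carrier_mat dx dx" and B: "B \<in> carrier_mat dx du" and C: "C \<in> carrier_mat dx dv"
    and w: "w \<in> carrier_vec dx" and cV: "cV \<in> carrier_vec dv" and GV: "GV \<in> carrier_mat dv nV"
    and b: "b \<in> carrier_vec du" and P: "P \<in> carrier_mat du nI" and lam: "lam \<in> carrier_vec nI"
    and GF: "GF \<in> carrier_mat du k" and Psi: "Psi \<in> carrier_mat k k" and rho: "rho \<in> carrier_vec k"
    and q: "q \<in> carrier_vec nV"
  shows "M *\<^sub>v (B *\<^sub>v (b + P *\<^sub>v lam + (GF * Psi) *\<^sub>v rho) + C *\<^sub>v (cV + GV *\<^sub>v q) + w)
    = M *\<^sub>v (B *\<^sub>v b + C *\<^sub>v cV + w) + ((M * B * P) *\<^sub>v lam + ((M * B * GF * Psi) *\<^sub>v rho + (M * C * GV) *\<^sub>v q))"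
proof -
  define X1 where "X1 = B *\<^sub>v b"
  define X2 where "X2 = B *\<^sub>v (P *\<^sub>v lam)"
  define X3 where "X3 = B *\<^sub>v (GF *\<^sub>v (Psi *\<^sub>v rho))"
  define X4 where "X4 = C *\<^sub>v cV"
  define X5 where "X5 = C *\<^sub>v (GV *\<^sub>v q)"
  have c1: "X1 \<in> carrier_vec dx" "X2 \<in> carrier_vec dx" "X3 \<in> carrier_vec dx" "X4 \<in> carrier_vec dx" "X5 \<in> carrier_vec dx"
    unfolding X1_def X2_def X3_def X4_def X5_def
    by (rule mult_mat_vec_carrier[OF B] mult_mat_vec_carrier[OF C]
        mult_mat_vec_carrier[OF P] mult_mat_vec_carrier[OF GF] mult_mat_vec_carrier[OF GV]
        mult_mat_vec_carrier[OF Psi] b lam rho cV q)+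
  have pc: "P *\<^sub>v lam \<in> carrier_vec du" using P lam by simp
  have fc: "(GF * Psi) *\<^sub>v rho \<in> carrier_vec du" using GF Psi rho by (metis mult_carrier_mat mult_mat_vec_carrier)
  have gc: "GV *\<^sub>v q \<in> carrier_vec dv" using GV q by simp
  have e1: "B *\<^sub>v (b + P *\<^sub>v lam + (GF * Psi) *\<^sub>v rho) = X1 + X2 + X3"
  proof -
    have "B *\<^sub>v (b + P *\<^sub>v lam + (GF * Psi) *\<^sub>v rho) = X1 + (X2 + X3)"
      unfolding X1_def X2_def X3_def using B b pc fc GF Psi rho
      by (simp add: mult_add_distrib_mat_vec[OF B])
    also have "\<dots> = X1 + X2 + X3" by (rule assoc_add_vec[symmetric, OF c1(1-3)])
    finally show ?thesis .
  qed
  have e2: "C *\<^sub>v (cV + GV *\<^sub>v q) = X4 + X5"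
    unfolding X4_def X5_def using C cV gc by (simp add: mult_add_distrib_mat_vec[OF C])
  have e3: "(M * B * P) *\<^sub>v lam = M *\<^sub>v X2" unfolding X2_def
    by (subst assoc_mult_mat_vec[OF mult_carrier_mat[OF M B] P lam], subst assoc_mult_mat_vec[OF M B pc], rule refl)
  have e4: "(M * B * GF * Psi) *\<^sub>v rho = M *\<^sub>v X3"
  proof -
    have pr: "Psi *\<^sub>v rho \<in> carrier_vec k" using Psi rho by simp
    have gpr: "GF *\<^sub>v (Psi *\<^sub>v rho) \<in> carrier_vec du" using GF pr by simp
    show ?thesis unfolding X3_def
    by (subst assoc_mult_mat_vec[OF mult_carrier_mat[OF mult_carrier_mat[OF M B] GF] Psi rho],
        subst assoc_mult_mat_vec[OF mult_carrier_mat[OF M B] GF pr], subst assoc_mult_mat_vec[OF M B gpr], rule refl)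
  qed
  have e5: "(M * C * GV) *\<^sub>v q = M *\<^sub>v X5" unfolding X5_def
    by (subst assoc_mult_mat_vec[OF mult_carrier_mat[OF M C] GV q], subst assoc_mult_mat_vec[OF M C gc], rule refl)
  have e6: "B *\<^sub>v b = X1" "C *\<^sub>v cV = X4" unfolding X1_def X4_def by simp_all
  show ?thesis unfolding e1 e2 e3 e4 e5 e6
    using c1 w M by (intro eq_vecI) (auto simp: mult_add_distrib_mat_vec[OF M] scalar_prod_add_distrib[of _ dx] ac_simps)
qed


theorem proposition6p1:
  fixes dx du dv nV nI t :: nat and m :: "nat \<Rightarrow> nat"
    and A B C GV GI :: "real mat" and w cV alpha gamma :: "real vec"
    and beta psi :: "nat \<Rightarrow> real vec" and Phi GF :: "nat \<Rightarrow> real mat"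
  assumes A: "A \<in> carrier_mat dx dx"
    and B: "B \<in> carrier_mat dx du"
    and C: "C \<in> carrier_mat dx dv"
    and w: "w \<in> carrier_vec dx"
    and cV: "cV \<in> carrier_vec dv"
    and GV: "GV \<in> carrier_mat dv nV"
    and GI: "GI \<in> carrier_mat dx nI"
    and alpha: "alpha \<in> carrier_vec dx"
    and gamma: "gamma \<in> carrier_vec nI" "\<forall>j < nI. gamma $ j \<ge> 0"
    and beta: "\<forall>s < t. beta s \<in> carrier_vec du"
    and Phi: "\<forall>s < t. Phi s \<in> carrier_mat du nI"
    and GF: "\<forall>s < t. GF s \<in> carrier_mat du (m s)"
    and psi: "\<forall>s < t. psi s \<in> carrier_vec (m s) \<and> (\<forall>j < m s. psi s $ j \<ge> 0)"
  shows
    "let Gamma = diag_of_vec gamma;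
         Psi = (\<lambda>s. diag_of_vec (psi s));
         reach = {traj A B C w (alpha + (GI * Gamma) *\<^sub>v lam)
                      (\<lambda>s. beta s + Phi s *\<^sub>v lam + (GF s * Psi s) *\<^sub>v rho s) v t
                  | lam rho v. lam \<in> unit_box nI
                       \<and> (\<forall>s < t. rho s \<in> unit_box (m s))
                       \<and> (\<forall>s < t. v s \<in> zonotope cV GV)};
         center = (A ^\<^sub>m t) *\<^sub>v alpha
                  + vsum dx (\<lambda>s. (A ^\<^sub>m (t - 1 - s)) *\<^sub>v (B *\<^sub>v beta s + C *\<^sub>v cV + w)) {..<t};
         FI = (A ^\<^sub>m t) * GI * Gamma
              + msum dx nI (\<lambda>s. (A ^\<^sub>m (t - 1 - s)) * B * Phi s) {..<t};
         F = (\<lambda>s. (A ^\<^sub>m (t - 1 - s)) * B * GF s * Psi s);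
         G = hcat dx ([FI] @ map F [0..<t]
                       @ map (\<lambda>s. (A ^\<^sub>m (t - 1 - s)) * C * GV) [0..<t])
     in reach = zonotope center G
        \<and> dim_col G = nI + (\<Sum>s<t. m s) + t * nV"
proof -
  define Gamma where "Gamma = diag_of_vec gamma"
  define Psi where "Psi = (\<lambda>s. diag_of_vec (psi s))"
  define center where "center = (A ^\<^sub>m t) *\<^sub>v alpha
                  + vsum dx (\<lambda>s. (A ^\<^sub>m (t - 1 - s)) *\<^sub>v (B *\<^sub>v beta s + C *\<^sub>v cV + w)) {..<t}"
  define FI where "FI = (A ^\<^sub>m t) * GI * Gamma
              + msum dx nI (\<lambda>s. (A ^\<^sub>m (t - 1 - s)) * B * Phi s) {..<t}"
  define F where "F = (\<lambda>s. (A ^\<^sub>m (t - 1 - s)) * B * GF s * Psi s)"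
  define H where "H = (\<lambda>s. (A ^\<^sub>m (t - 1 - s)) * C * GV)"
  define G where "G = hcat dx ([FI] @ map F [0..<t] @ map H [0..<t])"
  define reach where "reach = {traj A B C w (alpha + (GI * Gamma) *\<^sub>v lam)
                      (\<lambda>s. beta s + Phi s *\<^sub>v lam + (GF s * Psi s) *\<^sub>v rho s) v t
                  | lam rho v. lam \<in> unit_box nI
                       \<and> (\<forall>s < t. rho s \<in> unit_box (m s))
                       \<and> (\<forall>s < t. v s \<in> zonotope cV GV)}"
  have Gm: "Gamma \<in> carrier_mat nI nI" unfolding Gamma_def by (rule diag_carrier[OF gamma(1)])
  have Psim: "Psi s \<in> carrier_mat (m s) (m s)" if "s < t" for s
    unfolding Psi_def using psi that by (intro diag_carrier) auto
  have Ak: "A ^\<^sub>m k \<in> carrier_mat dx dx" for k using A by simp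
  have FIm: "FI \<in> carrier_mat dx nI" unfolding FI_def
    by (intro add_carrier_mat mult_carrier_mat msum_carrier Ak GI Gm)
  have Fm: "F s \<in> carrier_mat dx (m s)" if "s < t" for s
    unfolding F_def using Ak B GF Psim[OF that] that by (intro mult_carrier_mat) auto
  have Hm: "H s \<in> carrier_mat dx nV" for s
    unfolding H_def using Ak C GV by (intro mult_carrier_mat) auto
  have cc: "center \<in> carrier_vec dx" unfolding center_def
    using Ak alpha by (intro add_carrier_vec mult_mat_vec_carrier vsum_carrier) auto
  have dimG: "dim_col G = nI + (\<Sum>s<t. m s) + t * nV"
  proof -
    have "sum_list (map (\<lambda>s. dim_col (F s)) [0..<t]) = (\<Sum>s<t. m s)"
      unfolding interv_sum_list_conv_sum_set_nat using Fm
      by (simp add: atLeast0LessThan) (rule sum.cong, auto)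
    moreover have "sum_list (map (\<lambda>s. dim_col (H s)) [0..<t]) = t * nV"
    proof -
      have "dim_col (H s) = nV" for s using Hm[of s] by simp
      then show ?thesis unfolding interv_sum_list_conv_sum_set_nat by simp
    qed
    ultimately show ?thesis unfolding G_def using FIm by (simp add: comp_def)
  qed
  have ZFI: "zonotope center (hcat dx [FI]) = {center + FI *\<^sub>v lam | lam. lam \<in> unit_box nI}"
    unfolding hcat_single[OF carrier_matD(1)[OF FIm]] zonotope_alt using FIm by simp
  have ZF: "zonotope (0\<^sub>v dx) (hcat dx (map F [0..<t])) =
     {vsum dx (\<lambda>s. F s *\<^sub>v r s) {..<t} | r. \<forall>s<t. r s \<in> unit_box (m s)}"
  proof -
    have e: "(\<forall>s<t. r s \<in> unit_box (dim_col (F s))) = (\<forall>s<t. r s \<in> unit_box (m s))" for r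
      using carrier_matD(2)[OF Fm] by auto
    have Z0: "zonotope (0\<^sub>v dx) (hcat dx (map F [0..<t])) =
      {vsum dx (\<lambda>s. F s *\<^sub>v r s) {..<t} | r. \<forall>s<t. r s \<in> unit_box (dim_col (F s))}"
      by (rule zono_list) (use Fm in auto)
    show ?thesis unfolding Z0 e ..
  qed
  have ZH: "zonotope (0\<^sub>v dx) (hcat dx (map H [0..<t])) =
     {vsum dx (\<lambda>s. H s *\<^sub>v r s) {..<t} | r. \<forall>s<t. r s \<in> unit_box nV}"
  proof -
    have e: "(\<forall>s<t. r s \<in> unit_box (dim_col (H s))) = (\<forall>s<t. r s \<in> unit_box nV)" for r
      using carrier_matD(2)[OF Hm] by auto
    have Z0: "zonotope (0\<^sub>v dx) (hcat dx (map H [0..<t])) =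
      {vsum dx (\<lambda>s. H s *\<^sub>v r s) {..<t} | r. \<forall>s<t. r s \<in> unit_box (dim_col (H s))}"
      by (rule zono_list) (use Hm in auto)
    show ?thesis unfolding Z0 e ..
  qed
  have Zeq: "z \<in> zonotope center G \<longleftrightarrow> (\<exists>lam r q. z = (center + FI *\<^sub>v lam) +
      (vsum dx (\<lambda>s. F s *\<^sub>v r s) {..<t} + vsum dx (\<lambda>s. H s *\<^sub>v q s) {..<t})
      \<and> lam \<in> unit_box nI \<and> (\<forall>s<t. r s \<in> unit_box (m s)) \<and> (\<forall>s<t. q s \<in> unit_box nV))" for z
    unfolding G_def zono_append[OF cc, of "[FI]"] zono_append[OF zero_carrier_vec, of dx "map F [0..<t]"]
      ZFI ZF ZH by blast
  have K: "traj A B C w (alpha + (GI * Gamma) *\<^sub>v lam)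
                      (\<lambda>s. beta s + Phi s *\<^sub>v lam + (GF s * Psi s) *\<^sub>v rho s) v t
      = (center + FI *\<^sub>v lam) +
      (vsum dx (\<lambda>s. F s *\<^sub>v rho s) {..<t} + vsum dx (\<lambda>s. H s *\<^sub>v q s) {..<t})"
    if lam: "lam \<in> carrier_vec nI" and rho: "\<forall>s<t. rho s \<in> carrier_vec (m s)"
      and q: "\<forall>s<t. q s \<in> carrier_vec nV" and v: "\<forall>s<t. v s = cV + GV *\<^sub>v q s"
    for lam rho q v
  proof -
    have GIG: "GI * Gamma \<in> carrier_mat dx nI" using GI Gm by simp
    have x0: "alpha + (GI * Gamma) *\<^sub>v lam \<in> carrier_vec dx" using alpha GIG lam by simp
    have Plam: "s < t \<Longrightarrow> Phi s *\<^sub>v lam \<in> carrier_vec du" for s using Phi lam by auto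
    have fr: "s < t \<Longrightarrow> (GF s * Psi s) *\<^sub>v rho s \<in> carrier_vec du" for s
      using GF Psim rho by (meson mult_carrier_mat mult_mat_vec_carrier)
    have uc: "\<forall>s<t. beta s + Phi s *\<^sub>v lam + (GF s * Psi s) *\<^sub>v rho s \<in> carrier_vec du"
      using beta Plam fr by auto
    have vc: "\<forall>s<t. v s \<in> carrier_vec dv" using v q cV GV by auto
    define a where "a = (\<lambda>s. (A ^\<^sub>m (t - 1 - s)) *\<^sub>v (B *\<^sub>v beta s + C *\<^sub>v cV + w))"
    define p where "p = (\<lambda>s. (A ^\<^sub>m (t - 1 - s) * B * Phi s) *\<^sub>v lam)"
    define f where "f = (\<lambda>s. F s *\<^sub>v rho s)"
    define h where "h = (\<lambda>s. H s *\<^sub>v q s)"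
    have ac: "a s \<in> carrier_vec dx" if "s < t" for s
      unfolding a_def using Ak B C w cV beta that by (intro mult_mat_vec_carrier[OF Ak]) auto
    have pcr: "p s \<in> carrier_vec dx" if "s < t" for s
      unfolding p_def using mult_carrier_mat[OF mult_carrier_mat[OF Ak B] Phi[rule_format, OF that]] lam
      by (rule mult_mat_vec_carrier)
    have fcr: "f s \<in> carrier_vec dx" if "s < t" for s
      unfolding f_def using Fm[OF that] rho that by auto
    have hcr: "h s \<in> carrier_vec dx" if "s < t" for s
      unfolding h_def using Hm[of s] q that by auto
    have T: "traj A B C w (alpha + (GI * Gamma) *\<^sub>v lam)
                      (\<lambda>s. beta s + Phi s *\<^sub>v lam + (GF s * Psi s) *\<^sub>v rho s) v t
      = (A ^\<^sub>m t) *\<^sub>v (alpha + (GI * Gamma) *\<^sub>v lam) + vsum dx (\<lambda>s. a s + (p s + (f s + h s))) {..<t}"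
      unfolding traj_closed[OF A B C w x0 uc vc]
    proof (intro arg_cong2[where f="(+)"] refl vsum_cong)
      fix s assume "s \<in> {..<t}"
      hence s: "s < t" by simp
      show "A ^\<^sub>m (t - 1 - s) *\<^sub>v (B *\<^sub>v (beta s + Phi s *\<^sub>v lam + (GF s * Psi s) *\<^sub>v rho s) + C *\<^sub>v v s + w)
        = a s + (p s + (f s + h s))"
        unfolding a_def p_def f_def h_def F_def H_def v[rule_format, OF s]
        by (rule step_eq[OF Ak B C w cV GV _ _ lam GF[rule_format, OF s] Psim[OF s]])
           (use beta Phi rho q s in auto)
    qed
    have V: "vsum dx (\<lambda>s. a s + (p s + (f s + h s))) {..<t}
       = vsum dx a {..<t} + (vsum dx p {..<t} + (vsum dx f {..<t} + vsum dx h {..<t}))"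
    proof -
      have "vsum dx (\<lambda>s. a s + (p s + (f s + h s))) {..<t} = vsum dx a {..<t} + vsum dx (\<lambda>s. p s + (f s + h s)) {..<t}"
        by (rule vsum_add) (use ac pcr fcr hcr in auto)
      also have "vsum dx (\<lambda>s. p s + (f s + h s)) {..<t} = vsum dx p {..<t} + vsum dx (\<lambda>s. f s + h s) {..<t}"
        by (rule vsum_add) (use pcr fcr hcr in auto)
      also have "vsum dx (\<lambda>s. f s + h s) {..<t} = vsum dx f {..<t} + vsum dx h {..<t}"
        by (rule vsum_add) (use fcr hcr in auto)
      finally show ?thesis .
    qed
    have P: "vsum dx p {..<t} = msum dx nI (\<lambda>s. (A ^\<^sub>m (t - 1 - s)) * B * Phi s) {..<t} *\<^sub>v lam"
    proof -
      have PM: "A ^\<^sub>m (t - 1 - s) * B * Phi s \<in> carrier_mat dx nI" if "s \<in> {..<t}" for s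
        using mult_carrier_mat[OF mult_carrier_mat[OF Ak B] Phi[rule_format]] that by auto
      show ?thesis unfolding p_def by (rule msum_mult[symmetric, OF PM lam])
    qed
    have A1: "(A ^\<^sub>m t) *\<^sub>v (alpha + (GI * Gamma) *\<^sub>v lam) = (A ^\<^sub>m t) *\<^sub>v alpha + ((A ^\<^sub>m t) * GI * Gamma) *\<^sub>v lam"
      using Ak alpha GIG lam GI Gm
      by (simp add: mult_add_distrib_mat_vec[OF Ak] assoc_mult_mat[OF Ak GI Gm] assoc_mult_mat_vec[OF Ak GIG lam])
    have T3: "A ^\<^sub>m t * GI * Gamma \<in> carrier_mat dx nI" by (rule mult_carrier_mat[OF mult_carrier_mat[OF Ak GI] Gm])
    have F1: "FI *\<^sub>v lam = ((A ^\<^sub>m t) * GI * Gamma) *\<^sub>v lam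
        + msum dx nI (\<lambda>s. (A ^\<^sub>m (t - 1 - s)) * B * Phi s) {..<t} *\<^sub>v lam"
      unfolding FI_def by (rule add_mult_distrib_mat_vec[OF T3 msum_carrier lam])
    have C1: "center = (A ^\<^sub>m t) *\<^sub>v alpha + vsum dx a {..<t}" unfolding center_def a_def ..
    have c2: "(A ^\<^sub>m t) *\<^sub>v alpha \<in> carrier_vec dx" using Ak alpha by (rule mult_mat_vec_carrier)
    have c3: "((A ^\<^sub>m t) * GI * Gamma) *\<^sub>v lam \<in> carrier_vec dx" using T3 lam by (rule mult_mat_vec_carrier)
    have c4: "msum dx nI (\<lambda>s. (A ^\<^sub>m (t - 1 - s)) * B * Phi s) {..<t} *\<^sub>v lam \<in> carrier_vec dx"
      using msum_carrier lam by (rule mult_mat_vec_carrier)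
    have gen: "(x1 + x2) + (y + (x3 + (z1 + z2))) = ((x1 + y) + (x2 + x3)) + (z1 + z2)"
      if "x1 \<in> carrier_vec dx" "x2 \<in> carrier_vec dx" "x3 \<in> carrier_vec dx" "y \<in> carrier_vec dx"
        "z1 \<in> carrier_vec dx" "z2 \<in> carrier_vec dx" for x1 x2 x3 y z1 z2 :: "real vec"
      using that by (intro eq_vecI) auto
    show ?thesis unfolding T V P A1 F1 C1 f_def[symmetric] h_def[symmetric]
      by (rule gen[OF c2 c3 c4 vsum_carrier(1) vsum_carrier(1) vsum_carrier(1)])
  qed
  have R: "reach = zonotope center G"
  proof (intro equalityI subsetI)
    fix z assume "z \<in> reach"
    then obtain lam rho v where z: "z = traj A B C w (alpha + (GI * Gamma) *\<^sub>v lam)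
                      (\<lambda>s. beta s + Phi s *\<^sub>v lam + (GF s * Psi s) *\<^sub>v rho s) v t"
      and lam: "lam \<in> unit_box nI" and rho: "\<forall>s<t. rho s \<in> unit_box (m s)"
      and vz: "\<forall>s<t. v s \<in> zonotope cV GV"
      unfolding reach_def by blast
    have "\<forall>s. \<exists>qq. s < t \<longrightarrow> qq \<in> unit_box nV \<and> v s = cV + GV *\<^sub>v qq"
      using vz carrier_matD(2)[OF GV] unfolding zonotope_alt by auto
    then obtain q where q: "\<forall>s<t. q s \<in> unit_box nV \<and> v s = cV + GV *\<^sub>v q s"
      by metis
    have "z = (center + FI *\<^sub>v lam) +
      (vsum dx (\<lambda>s. F s *\<^sub>v rho s) {..<t} + vsum dx (\<lambda>s. H s *\<^sub>v q s) {..<t})"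
      unfolding z by (rule K) (use lam rho q in \<open>auto simp: unit_box_def\<close>)
    then show "z \<in> zonotope center G" unfolding Zeq using lam rho q by blast
  next
    fix z assume "z \<in> zonotope center G"
    then obtain lam r q where z: "z = (center + FI *\<^sub>v lam) +
      (vsum dx (\<lambda>s. F s *\<^sub>v r s) {..<t} + vsum dx (\<lambda>s. H s *\<^sub>v q s) {..<t})"
      and lam: "lam \<in> unit_box nI" and r: "\<forall>s<t. r s \<in> unit_box (m s)"
      and q: "\<forall>s<t. q s \<in> unit_box nV"
      unfolding Zeq by blast
    define v where "v = (\<lambda>s. cV + GV *\<^sub>v q s)"
    have vz: "\<forall>s<t. v s \<in> zonotope cV GV"
      unfolding v_def zonotope_alt using q carrier_matD(2)[OF GV] by auto
    have "z = traj A B C w (alpha + (GI * Gamma) *\<^sub>v lam)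
                      (\<lambda>s. beta s + Phi s *\<^sub>v lam + (GF s * Psi s) *\<^sub>v r s) v t"
      unfolding z by (rule K[symmetric]) (use lam r q in \<open>auto simp: unit_box_def v_def\<close>)
    then show "z \<in> reach" unfolding reach_def using lam r vz by blast
  qed
  show ?thesis
    using R dimG unfolding Let_def reach_def G_def FI_def F_def H_def center_def Psi_def Gamma_def
    by blast
qed


end
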